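(* Let $\mathcal G=(\mathcal V,\mathcal E,W)$ be a network, $h\in\mathbb{R}^{\mathcal V}$, and consider the SNC game with binary actions on $\mathcal G$ with external field $h$, with set of Nash equilibria $\mathcal N$. Let $\mathcal V=\mathcal R\cup\mathcal S$, $\mathcal R\cap\mathcal S=\emptyset$, be a binary partition such that $\mathcal G_{\mathcal R}$ is unsigned. Let $h^-,h^+\in\mathbb{R}^{\mathcal R}$ be given by $h_i^+=h_i+w_i^{\mathcal S}$ and $h_i^-=h_i-w_i^{\mathcal S}$ for $i\in\mathcal R$. Assume $\mathcal G_{\mathcal R}$ is $(h^-,h^+)$-indecomposable and $$w_i^{\mathcal R}-|h_i|>w_i^{\mathcal S}\qquad\forall i\in\mathcal R.$$ Then: (i) if, for every $a\in\{\pm1\}$, the set $\mathcal N_{\mathcal S}^{(a\mathbf 1)}$ is globally BR-reachable for the $\mathcal S$-restricted game with strategy profile of players in $\mathcal R$ frozen to $a\mathbf 1$, then the set $\tilde{\mathcal N}=\{x^*\in\mathcal N:\ x^*_{\mathcal R}\in\{\mathbf 1,-\mathbf 1\}\}$ is nonempty and globally BR-reachable for the SNC game; (ii) if, for every $a\in\{\pm1\}$, there exists a nonempty subset $\bar{\mathcal N}_{\mathcal S}^{(a\mathbf 1)}\subseteq\mathcal N_{\mathcal S}^{(a\mathbf 1)}$ that is globally BR-stable for the $\mathcal S$-restricted game with strategy profile of players in $\mathcal R$ frozen to $a\mathbf 1$, then there exists a nonempty subset $\overline{\mathcal N}\subseteq\tilde{\mathcal N}$ that is globally BR-stable for the SNC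 game.
   Context: A network is a triple $\mathcal G=(\mathcal V,\mathcal E,W)$ where $\mathcal V$ is a finite nonempty set, $\mathcal E\subseteq\mathcal V\times\mathcal V$, and $W\in\mathbb{R}^{\mathcal V\times\mathcal V}$ has zero diagonal and satisfies $W_{ij}\neq0$ iff $(i,j)\in\mathcal E$ (weights may have either sign). It is unsigned if $W\ge0$ entrywise. For $\mathcal U\subseteq\mathcal V$, the subnetwork $\mathcal G_{\mathcal U}$ has node set $\mathcal U$, links $\mathcal E\cap(\mathcal U\times\mathcal U)$ and weight matrix $W_{\mathcal U\mathcal U}$. For $i\in\mathcal V$ and $\mathcal B\subseteq\mathcal V$, $w_i^{\mathcal B}=\sum_{j\in\mathcal B}|W_{ij}|$. $\mathbf 1$ is the all-ones vector. Indecomposability: a network with node set $\mathcal U$ and $h^-\le h^+$ in $\mathbb{R}^{\mathcal U}$ is $(h^-,h^+)$-indecomposable if for every partition $\mathcal U=\mathcal U^-\cup\mathcal U^+$ into two disjoint nonempty sets there is a node $i$ with either $i\in\mathcal U^+$ and $w_i^{\mathcal U^+}+h_i^+<w_i^{\mathcal U^-}$, or $i\in\mathcal U^-$ and $w_i^{\mathcal U^-}-h_i^-<w_i^{\mathcal U^+}$. The SNC game with binary actions on $\mathcal G$ with external field $h\in\mathbb{R}^{\mathcal V}$ has player set $\mathcal V$, action set $\{-1,+1\}$ for each player, strategy profiles $\mathcal X=\{\pm1\}^{\mathcal V}$ (written $x=(x_{\mathcal R},x_{\mathcal S})$), and utilities $u_i(x)=h_ix_i+x_i\sum_{j\in\mathcal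 V}W_{ij}x_j$. Best responses $\mathcal B_i(x_{-i})=\arg\max_{x_i\in\{\pm1\}}u_i(x_i,x_{-i})$; Nash equilibrium: $x^*_i\in\mathcal B_i(x^*_{-i})$ for all $i$. For $y\in\{\pm1\}^{\mathcal R}$, the $\mathcal S$-restricted game with strategy profile of players in $\mathcal R$ frozen to $y$ has player set $\mathcal S$, actions $\{\pm1\}$, and utilities $u_i^{(y)}(z)=u_i(y,z)$ for $i\in\mathcal S$, $z\in\{\pm1\}^{\mathcal S}$; $\mathcal N_{\mathcal S}^{(y)}$ is its set of Nash equilibria. For any game with binary actions and profile set $\mathcal Y$: a BR-path of length $l\ge0$ from $x$ to $y$ is a sequence $x^{(0)}=x,\dots,x^{(l)}=y$ such that for each $k$ some player $i_k$ has $x^{(k)}_{-i_k}=x^{(k-1)}_{-i_k}$ and $x^{(k)}_{i_k}\in\mathcal B_{i_k}(x^{(k-1)}_{-i_k})\setminus\{x^{(k-1)}_{i_k}\}$. A set $\mathcal Y^*\subseteq\mathcal Y$ is globally BR-reachable if from every profile there is a BR-path to some element of $\mathcal Y^*$; BR-invariant if there is no BR-path from an element of $\mathcal Y^*$ to an element outside; globally BR-stable if both. *)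

theory Defs
  imports Complex_Main
begin

text \<open>Networks: node set V = UNIV of a finite type 'v (finite, nonempty);
  the weight matrix is W :: 'v \<Rightarrow> 'v \<Rightarrow> real; the link set is
  implicit, E = {(i,j). W i j \<noteq> 0}.\<close>

definition wsum :: "('v \<Rightarrow> 'v \<Rightarrow> real) \<Rightarrow> 'v \<Rightarrow> 'v set \<Rightarrow> real" where
  "wsum W i B = (\<Sum>j\<in>B. \<bar>W i j\<bar>)"

definition unsigned_on :: "('v \<Rightarrow> 'v \<Rightarrow> real) \<Rightarrow> 'v set \<Rightarrow> bool" where
  "unsigned_on W U \<longleftrightarrow> (\<forall>i\<in>U. \<forall>j\<in>U. W i j \<ge> 0)"

definition indecomposable ::
  "('v \<Rightarrow> 'v \<Rightarrow> real) \<Rightarrow> 'v set \<Rightarrow> ('v \<Rightarrow> real) \<Rightarrow> ('v \<Rightarrow> real) \<Rightarrow> bool" where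
  "indecomposable W U hm hp \<longleftrightarrow>
    (\<forall>Um Up. Um \<inter> Up = {} \<and> Um \<union> Up = U \<and> Um \<noteq> {} \<and> Up \<noteq> {} \<longrightarrow>
       (\<exists>i\<in>Up. wsum W i Up + hp i < wsum W i Um) \<or>
       (\<exists>i\<in>Um. wsum W i Um - hm i < wsum W i Up))"

definition snc_util :: "('v::finite \<Rightarrow> 'v \<Rightarrow> real) \<Rightarrow> ('v \<Rightarrow> real) \<Rightarrow> 'v \<Rightarrow> ('v \<Rightarrow> real) \<Rightarrow> real" where
  "snc_util W h i x = h i * x i + x i * (\<Sum>j\<in>UNIV. W i j * x j)"

definition best_resp :: "('v \<Rightarrow> ('v \<Rightarrow> real) \<Rightarrow> real) \<Rightarrow> 'v \<Rightarrow> ('v \<Rightarrow> real) \<Rightarrow> real set" where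
  "best_resp u i x = {a \<in> {-1, 1}. \<forall>b\<in>{-1, 1}. u i (x(i := b)) \<le> u i (x(i := a))}"

definition br_step :: "'v set \<Rightarrow> ('v \<Rightarrow> ('v \<Rightarrow> real) \<Rightarrow> real) \<Rightarrow> ('v \<Rightarrow> real) \<Rightarrow> ('v \<Rightarrow> real) \<Rightarrow> bool" where
  "br_step P u x y \<longleftrightarrow> (\<exists>i\<in>P. y = x(i := y i) \<and> y i \<noteq> x i \<and> y i \<in> best_resp u i x)"

definition br_path :: "'v set \<Rightarrow> ('v \<Rightarrow> ('v \<Rightarrow> real) \<Rightarrow> real) \<Rightarrow> ('v \<Rightarrow> real) \<Rightarrow> ('v \<Rightarrow> real) \<Rightarrow> bool" where
  "br_path P u = (br_step P u)\<^sup>*\<^sup>*"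

definition nash_set :: "'v set \<Rightarrow> ('v \<Rightarrow> ('v \<Rightarrow> real) \<Rightarrow> real) \<Rightarrow> ('v \<Rightarrow> real) set \<Rightarrow> ('v \<Rightarrow> real) set" where
  "nash_set P u X = {x \<in> X. \<forall>i\<in>P. x i \<in> best_resp u i x}"

definition glob_br_reachable :: "'v set \<Rightarrow> ('v \<Rightarrow> ('v \<Rightarrow> real) \<Rightarrow> real) \<Rightarrow> ('v \<Rightarrow> real) set \<Rightarrow> ('v \<Rightarrow> real) set \<Rightarrow> bool" where
  "glob_br_reachable P u X Y \<longleftrightarrow> (\<forall>x\<in>X. \<exists>y\<in>Y. br_path P u x y)"

definition br_invariant :: "'v set \<Rightarrow> ('v \<Rightarrow> ('v \<Rightarrow> real) \<Rightarrow> real) \<Rightarrow> ('v \<Rightarrow> real) set \<Rightarrow> ('v \<Rightarrow> real) set \<Rightarrow> bool" where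
  "br_invariant P u X Y \<longleftrightarrow> (\<forall>x\<in>Y. \<forall>y\<in>X. br_path P u x y \<longrightarrow> y \<in> Y)"

definition glob_br_stable :: "'v set \<Rightarrow> ('v \<Rightarrow> ('v \<Rightarrow> real) \<Rightarrow> real) \<Rightarrow> ('v \<Rightarrow> real) set \<Rightarrow> ('v \<Rightarrow> real) set \<Rightarrow> bool" where
  "glob_br_stable P u X Y \<longleftrightarrow> glob_br_reachable P u X Y \<and> br_invariant P u X Y"

definition profiles :: "('v \<Rightarrow> real) set" where
  "profiles = {x. \<forall>i. x i \<in> {-1, 1}}"

text \<open>Profiles of the S-restricted game with the players in R frozen to a*1,
  identified with the full profiles (y,z) having y = a*1.\<close>
definition frozen_profiles :: "'v set \<Rightarrow> real \<Rightarrow> ('v \<Rightarrow> real) set" where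
  "frozen_profiles R a = {x \<in> profiles. \<forall>i\<in>R. x i = a}"

end

theory Submission
  imports Defs
begin
locale P5 =
  fixes W :: "'v::finite \<Rightarrow> 'v \<Rightarrow> real" and h :: "'v \<Rightarrow> real" and R S :: "'v set"
  assumes zero_diag: "\<forall>i. W i i = 0"
    and part1: "R \<inter> S = {}" and part2: "R \<union> S = UNIV"
    and unsigned: "unsigned_on W R"
    and indec: "indecomposable W R (\<lambda>i. h i - wsum W i S) (\<lambda>i. h i + wsum W i S)"
    and dom: "\<forall>i\<in>R. wsum W i R - \<bar>h i\<bar> > wsum W i S"
begin

definition Up :: "('v \<Rightarrow> real) \<Rightarrow> 'v set" where "Up x = {j\<in>R. x j = 1}"
definition Um :: "('v \<Rightarrow> real) \<Rightarrow> 'v set" where "Um x = {j\<in>R. x j = -1}"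
definition g :: "('v \<Rightarrow> real) \<Rightarrow> 'v \<Rightarrow> real" where "g x i = (\<Sum>j\<in>UNIV. W i j * x j)"

lemma util_upd: "snc_util W h i (x(i:=b)) = b * (h i + g x i)"
proof -
  have "(\<Sum>j\<in>UNIV. W i j * (x(i:=b)) j) = g x i"
    unfolding g_def by (rule sum.cong) (auto simp: zero_diag)
  then show ?thesis unfolding snc_util_def by (simp add: algebra_simps)
qed

lemma br_iff: "a \<in> {-1,1} \<Longrightarrow> a \<in> best_resp (snc_util W h) i x \<longleftrightarrow> 0 \<le> a * (h i + g x i)"
  unfolding best_resp_def util_upd by auto

lemma wsum_nonneg: "wsum W i A \<ge> 0"
  unfolding wsum_def by (simp add: sum_nonneg)

lemma wsum_mono: "A \<subseteq> B \<Longrightarrow> wsum W i A \<le> wsum W i B"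
  unfolding wsum_def by (rule sum_mono2) auto

lemma wsum_del: "wsum W i (A - {i}) = wsum W i A"
  unfolding wsum_def by (rule sum.mono_neutral_left) (auto simp: zero_diag)

lemma wsum_ins: "wsum W i (insert i A) = wsum W i A"
  by (metis Diff_insert_absorb insert_Diff_single wsum_del insert_absorb)

lemma sum_bounds:
  assumes x: "x \<in> profiles" and i: "i \<in> R"
  shows "g x i \<ge> wsum W i (Up x) - wsum W i (Um x) - wsum W i S"
    and "g x i \<le> wsum W i (Up x) - wsum W i (Um x) + wsum W i S"
proof -
  have gs: "g x i = (\<Sum>j\<in>R. W i j * x j) + (\<Sum>j\<in>S. W i j * x j)"
    unfolding g_def using part1 part2 by (metis finite sum.union_disjoint)
  have RU: "R = Up x \<union> Um x" and dj: "Up x \<inter> Um x = {}"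
    using x unfolding Up_def Um_def profiles_def by auto
  have "(\<Sum>j\<in>R. W i j * x j) = (\<Sum>j\<in>Up x. W i j * x j) + (\<Sum>j\<in>Um x. W i j * x j)"
    using RU dj by (metis finite sum.union_disjoint)
  also have "(\<Sum>j\<in>Up x. W i j * x j) = wsum W i (Up x)"
    unfolding wsum_def using unsigned i by (intro sum.cong) (auto simp: Up_def unsigned_on_def)
  also have "(\<Sum>j\<in>Um x. W i j * x j) = - wsum W i (Um x)"
    unfolding wsum_def using unsigned i by (auto simp: Um_def unsigned_on_def sum_negf[symmetric] intro!: sum.cong)
  finally have r: "(\<Sum>j\<in>R. W i j * x j) = wsum W i (Up x) - wsum W i (Um x)" by simp
  have "\<bar>\<Sum>j\<in>S. W i j * x j\<bar> \<le> (\<Sum>j\<in>S. \<bar>W i j * x j\<bar>)" by (rule sum_abs)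
  also have "\<dots> = wsum W i S" unfolding wsum_def
    using x by (intro sum.cong) (auto simp: profiles_def abs_mult, metis abs_minus_cancel abs_one insert_iff singletonD mult_cancel_left2 )
  finally have "\<bar>\<Sum>j\<in>S. W i j * x j\<bar> \<le> wsum W i S" .
  then show "g x i \<ge> wsum W i (Up x) - wsum W i (Um x) - wsum W i S"
    and "g x i \<le> wsum W i (Up x) - wsum W i (Um x) + wsum W i S"
    using gs r by linarith+
qed


definition upc where "upc x i \<longleftrightarrow> wsum W i (Um x) - h i + wsum W i S < wsum W i (Up x)"
definition dnc where "dnc x i \<longleftrightarrow> wsum W i (Up x) + h i + wsum W i S < wsum W i (Um x)"

lemma profiles_upd: "x \<in> profiles \<Longrightarrow> b \<in> {-1,1} \<Longrightarrow> x(i:=b) \<in> profiles"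
  unfolding profiles_def by auto

lemma flip_up:
  assumes x: "x \<in> profiles" and i: "i \<in> R" "x i = -1" and c: "upc x i"
  shows "br_step UNIV (snc_util W h) x (x(i:=1))"
proof -
  have "0 \<le> 1 * (h i + g x i)" using sum_bounds[OF x i(1)] c unfolding upc_def by simp
  then have "1 \<in> best_resp (snc_util W h) i x" using br_iff[of 1] by simp
  then show ?thesis unfolding br_step_def using i by (intro bexI[of _ i]) auto
qed

lemma flip_dn:
  assumes x: "x \<in> profiles" and i: "i \<in> R" "x i = 1" and c: "dnc x i"
  shows "br_step UNIV (snc_util W h) x (x(i:=-1))"
proof -
  have "0 \<le> -1 * (h i + g x i)" using sum_bounds[OF x i(1)] c unfolding dnc_def by simp
  then have "-1 \<in> best_resp (snc_util W h) i x" using br_iff[of "-1"] by simp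
  then show ?thesis unfolding br_step_def using i by (intro bexI[of _ i]) auto
qed

lemma R_fixed:
  assumes a: "a \<in> {-1,1}" and x: "x \<in> frozen_profiles R a" and i: "i \<in> R"
  shows "a \<in> best_resp (snc_util W h) i x" "-a \<notin> best_resp (snc_util W h) i x"
proof -
  have xp: "x \<in> profiles" using x unfolding frozen_profiles_def by auto
  have d: "wsum W i R - \<bar>h i\<bar> > wsum W i S" using dom i by auto
  have e: "wsum W i {} = 0" unfolding wsum_def by simp
  have "a * (h i + g x i) > 0"
  proof (cases "a = 1")
    case True
    then have "Up x = R" "Um x = {}" using x unfolding frozen_profiles_def Up_def Um_def by auto
    then show ?thesis using sum_bounds[OF xp i] d e True by auto
  next
    case False
    then have a1: "a = -1" using a by auto
    then have "Up x = {}" "Um x = R" using x unfolding frozen_profiles_def Up_def Um_def by auto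
    then show ?thesis using sum_bounds[OF xp i] d e a1 by auto
  qed
  then show "a \<in> best_resp (snc_util W h) i x" "-a \<notin> best_resp (snc_util W h) i x"
    using br_iff[of a] br_iff[of "-a"] a by auto
qed

lemma step_frozen:
  assumes a: "a \<in> {-1,1}" and x: "x \<in> frozen_profiles R a" and st: "br_step UNIV (snc_util W h) x y"
  shows "br_step S (snc_util W h) x y \<and> y \<in> frozen_profiles R a"
proof -
  obtain i where y: "y = x(i := y i)" "y i \<noteq> x i" "y i \<in> best_resp (snc_util W h) i x"
    using st unfolding br_step_def by auto
  have yi: "y i \<in> {-1,1}" using y(3) unfolding best_resp_def by auto
  have "i \<notin> R"
  proof
    assume iR: "i \<in> R"
    then have "x i = a" using x unfolding frozen_profiles_def by auto
    then have "y i = -a" using yi y(2) a by auto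
    then show False using R_fixed(2)[OF a x iR] y(3) by simp
  qed
  then have iS: "i \<in> S" using part2 by auto
  have xp: "x \<in> profiles" and xR: "\<forall>k\<in>R. x k = a" using x unfolding frozen_profiles_def by auto
  have yp: "y \<in> profiles" using profiles_upd[OF xp yi, of i] y(1) by simp
  have "\<forall>k\<in>R. y k = a"
  proof
    fix k assume k: "k \<in> R"
    then have "k \<noteq> i" using \<open>i \<notin> R\<close> by auto
    then have "y k = x k" by (subst y(1)) simp
    then show "y k = a" using xR k by simp
  qed
  then have "y \<in> frozen_profiles R a" using yp unfolding frozen_profiles_def by simp
  then show ?thesis using y iS unfolding br_step_def by auto
qed

lemma path_frozen:
  assumes "br_path UNIV (snc_util W h) x y" and a: "a \<in> {-1,1}" and "x \<in> frozen_profiles R a"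
  shows "br_path S (snc_util W h) x y \<and> y \<in> frozen_profiles R a"
  using assms(1,3) unfolding br_path_def
proof (induction rule: rtranclp_induct)
  case base then show ?case by simp
next
  case (step y z)
  then show ?case using step_frozen[OF a, of y z]
    by (meson rtranclp.rtrancl_into_rtrancl)
qed

lemma path_S_UNIV: "br_path S (snc_util W h) x y \<Longrightarrow> br_path UNIV (snc_util W h) x y"
  unfolding br_path_def
  by (rule rtranclp_mono[THEN predicate2D, rotated]) (auto simp: br_step_def)

lemma nash_frozen:
  assumes a: "a \<in> {-1,1}" and x: "x \<in> nash_set S (snc_util W h) (frozen_profiles R a)"
  shows "x \<in> nash_set UNIV (snc_util W h) profiles"
proof -
  have xf: "x \<in> frozen_profiles R a" using x unfolding nash_set_def by auto
  have "\<forall>i. x i \<in> best_resp (snc_util W h) i x"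
  proof
    fix i show "x i \<in> best_resp (snc_util W h) i x"
    proof (cases "i \<in> R")
      case True
      then have "x i = a" using xf unfolding frozen_profiles_def by auto
      then show ?thesis using R_fixed(1)[OF a xf True] by simp
    next
      case False
      then have "i \<in> S" using part2 by auto
      then show ?thesis using x unfolding nash_set_def by auto
    qed
  qed
  then show ?thesis using xf unfolding nash_set_def frozen_profiles_def by auto
qed

definition Inv where "Inv x \<longleftrightarrow> (\<forall>j\<in>R. x j = -1 \<longrightarrow> \<not> upc x j)"

lemma phase2:
  assumes "x \<in> profiles" "Inv x"
  shows "\<exists>y. (y \<in> frozen_profiles R 1 \<or> y \<in> frozen_profiles R (-1)) \<and> br_path UNIV (snc_util W h) x y"
  using assms
proof (induction "card (Up x)" arbitrary: x rule: less_induct)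
  case less
  note xp = less.prems(1)
  have RU: "R = Um x \<union> Up x" and dj: "Um x \<inter> Up x = {}"
    using xp unfolding Up_def Um_def profiles_def by auto
  show ?case
  proof (cases "Up x = {} \<or> Um x = {}")
    case True
    then have "x \<in> frozen_profiles R 1 \<or> x \<in> frozen_profiles R (-1)"
      using xp RU unfolding frozen_profiles_def Up_def Um_def profiles_def by blast
    then show ?thesis unfolding br_path_def by blast
  next
    case False
    then have "(\<exists>i\<in>Up x. wsum W i (Up x) + (h i + wsum W i S) < wsum W i (Um x)) \<or>
       (\<exists>i\<in>Um x. wsum W i (Um x) - (h i - wsum W i S) < wsum W i (Up x))"
      using indec RU dj unfolding indecomposable_def by blast
    moreover have "\<not> (\<exists>i\<in>Um x. wsum W i (Um x) - (h i - wsum W i S) < wsum W i (Up x))"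
      using less.prems(2) unfolding Inv_def upc_def Um_def by auto
    ultimately obtain i where i: "i \<in> Up x" "dnc x i" unfolding dnc_def by (auto simp: algebra_simps)
    have iR: "i \<in> R" and xi: "x i = 1" using i unfolding Up_def by auto
    define y where "y = x(i := -1)"
    have st: "br_step UNIV (snc_util W h) x y" unfolding y_def by (rule flip_dn[OF xp iR xi i(2)])
    have yp: "y \<in> profiles" unfolding y_def by (rule profiles_upd[OF xp]) simp
    have Upy: "Up y = Up x - {i}" and Umy: "Um y = insert i (Um x)"
      unfolding y_def Up_def Um_def using iR by auto
    have "Inv y" unfolding Inv_def
    proof (intro ballI impI notI)
      fix j assume j: "j \<in> R" "y j = -1" "upc y j"
      show False
      proof (cases "j = i")
        case True
        then show False using j(3) i(2) wsum_nonneg[of i S] unfolding upc_def dnc_def Upy Umy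
          by (simp add: wsum_ins wsum_del)
      next
        case False
        then have "x j = -1" using j unfolding y_def by simp
        then have "\<not> upc x j" using less.prems(2) j(1) unfolding Inv_def by auto
        moreover have "wsum W j (Um x) \<le> wsum W j (Um y)" "wsum W j (Up y) \<le> wsum W j (Up x)"
          unfolding Upy Umy by (auto intro: wsum_mono)
        ultimately show False using j(3) unfolding upc_def by linarith
      qed
    qed
    have "card (Up y) < card (Up x)" unfolding Upy using i(1)
      by (intro card_Diff1_less) auto
    then obtain z where "(z \<in> frozen_profiles R 1 \<or> z \<in> frozen_profiles R (-1))"
       "br_path UNIV (snc_util W h) y z"
      using less.hyps yp \<open>Inv y\<close> by blast
    then show ?thesis using st unfolding br_path_def by (meson converse_rtranclp_into_rtranclp)
  qed
qed

lemma phase1: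
  assumes "x \<in> profiles"
  shows "\<exists>y. (y \<in> frozen_profiles R 1 \<or> y \<in> frozen_profiles R (-1)) \<and> br_path UNIV (snc_util W h) x y"
  using assms
proof (induction "card (Um x)" arbitrary: x rule: less_induct)
  case less
  note xp = less.prems(1)
  show ?case
  proof (cases "Inv x")
    case True then show ?thesis using phase2 xp by blast
  next
    case False
    then obtain i where i: "i \<in> R" "x i = -1" "upc x i" unfolding Inv_def by auto
    define y where "y = x(i := 1)"
    have st: "br_step UNIV (snc_util W h) x y" unfolding y_def by (rule flip_up[OF xp i])
    have yp: "y \<in> profiles" unfolding y_def by (rule profiles_upd[OF xp]) simp
    have Umy: "Um y = Um x - {i}" unfolding y_def Um_def using i by auto
    have "i \<in> Um x" using i by (simp add: Um_def)
    then have "card (Um y) < card (Um x)" unfolding Umy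
      by (intro card_Diff1_less) auto
    then obtain z where "(z \<in> frozen_profiles R 1 \<or> z \<in> frozen_profiles R (-1))"
       "br_path UNIV (snc_util W h) y z"
      using less.hyps yp by blast
    then show ?thesis using st unfolding br_path_def by (meson converse_rtranclp_into_rtranclp)
  qed
qed

end
theorem proposition5:
  fixes W :: "'v::finite \<Rightarrow> 'v \<Rightarrow> real" and h :: "'v \<Rightarrow> real" and R S :: "'v set"
  assumes zero_diag: "\<forall>i. W i i = 0"
    and part: "R \<inter> S = {}" "R \<union> S = UNIV"
    and unsigned: "unsigned_on W R"
    and indec: "indecomposable W R (\<lambda>i. h i - wsum W i S) (\<lambda>i. h i + wsum W i S)"
    and dom: "\<forall>i\<in>R. wsum W i R - \<bar>h i\<bar> > wsum W i S"
  shows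
   "((\<forall>a\<in>{-1, 1::real}. glob_br_reachable S (snc_util W h) (frozen_profiles R a)
          (nash_set S (snc_util W h) (frozen_profiles R a)))
     \<longrightarrow> {x \<in> nash_set UNIV (snc_util W h) profiles. (\<forall>i\<in>R. x i = 1) \<or> (\<forall>i\<in>R. x i = -1)} \<noteq> {}
       \<and> glob_br_reachable UNIV (snc_util W h) profiles
          {x \<in> nash_set UNIV (snc_util W h) profiles. (\<forall>i\<in>R. x i = 1) \<or> (\<forall>i\<in>R. x i = -1)})
  \<and> ((\<forall>a\<in>{-1, 1::real}. \<exists>Nb. Nb \<noteq> {} \<and> Nb \<subseteq> nash_set S (snc_util W h) (frozen_profiles R a)
          \<and> glob_br_stable S (snc_util W h) (frozen_profiles R a) Nb)
     \<longrightarrow> (\<exists>Nb. Nb \<noteq> {}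
          \<and> Nb \<subseteq> {x \<in> nash_set UNIV (snc_util W h) profiles. (\<forall>i\<in>R. x i = 1) \<or> (\<forall>i\<in>R. x i = -1)}
          \<and> glob_br_stable UNIV (snc_util W h) profiles Nb))"
proof -
  interpret P5 W h R S using assms by unfold_locales auto
  let ?u = "snc_util W h"
  let ?N = "{x \<in> nash_set UNIV (snc_util W h) profiles. (\<forall>i\<in>R. x i = 1) \<or> (\<forall>i\<in>R. x i = -1)}"
  have inN: "x \<in> ?N" if a: "a \<in> {-1,1::real}" and x: "x \<in> nash_set S ?u (frozen_profiles R a)" for a and x :: "'v \<Rightarrow> real"
  proof -
    have "x \<in> frozen_profiles R a" using x unfolding nash_set_def by auto
    then have "(\<forall>i\<in>R. x i = 1) \<or> (\<forall>i\<in>R. x i = -1)" using a unfolding frozen_profiles_def by auto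
    then show ?thesis using nash_frozen[OF a x] by auto
  qed
  have nF: "nash_set S ?u (frozen_profiles R a) \<subseteq> frozen_profiles R a" for a
    unfolding nash_set_def by auto
  have reachF: "\<exists>a\<in>{-1,1::real}. \<exists>y\<in>frozen_profiles R a. br_path UNIV ?u x y" if "x \<in> profiles" for x :: "'v \<Rightarrow> real"
    using phase1[OF that] by blast
  have c1: "(\<lambda>_. 1) \<in> frozen_profiles R 1" unfolding frozen_profiles_def profiles_def by auto
  have fp: "frozen_profiles R a \<subseteq> profiles" for a unfolding frozen_profiles_def by auto
  show ?thesis
  proof (intro conjI impI)
    assume H: "\<forall>a\<in>{-1, 1::real}. glob_br_reachable S ?u (frozen_profiles R a)
          (nash_set S ?u (frozen_profiles R a))"
    from H c1 obtain y where "y \<in> nash_set S ?u (frozen_profiles R 1)"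
      unfolding glob_br_reachable_def by auto
    then show "?N \<noteq> {}" using inN[of 1 y] by auto
    show "glob_br_reachable UNIV ?u profiles ?N"
      unfolding glob_br_reachable_def
    proof
      fix x :: "'v \<Rightarrow> real" assume "x \<in> profiles"
      then obtain a y where a: "a \<in> {-1,1::real}" and y: "y \<in> frozen_profiles R a" and p1: "br_path UNIV ?u x y"
        using reachF by blast
      then obtain z where z: "z \<in> nash_set S ?u (frozen_profiles R a)" and p2: "br_path S ?u y z"
        using H unfolding glob_br_reachable_def by blast
      have "br_path UNIV ?u x z" using p1 path_S_UNIV[OF p2] unfolding br_path_def by simp
      then show "\<exists>z\<in>?N. br_path UNIV ?u x z" using inN[OF a z] by blast
    qed
  next
    assume H: "\<forall>a\<in>{-1, 1::real}. \<exists>Nb. Nb \<noteq> {} \<and> Nb \<subseteq> nash_set S ?u (frozen_profiles R a)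
          \<and> glob_br_stable S ?u (frozen_profiles R a) Nb"
    have "\<exists>NB. \<forall>a\<in>{-1, 1::real}. NB a \<noteq> {} \<and> NB a \<subseteq> nash_set S ?u (frozen_profiles R a)
          \<and> glob_br_stable S ?u (frozen_profiles R a) (NB a)"
      by (rule bchoice[OF H])
    then obtain NB where NBall: "\<forall>a\<in>{-1, 1::real}. NB a \<noteq> {} \<and> NB a \<subseteq> nash_set S ?u (frozen_profiles R a)
          \<and> glob_br_stable S ?u (frozen_profiles R a) (NB a)" by (rule exE)
    note NB = bspec[OF NBall]
    define Nb where "Nb = (\<Union>a\<in>{-1,1::real}. NB a)"
    have ne: "Nb \<noteq> {}"
    proof -
      have "NB 1 \<noteq> {}" using NB[of 1] by simp
      then show ?thesis unfolding Nb_def by blast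
    qed
    have sub: "Nb \<subseteq> ?N"
    proof
      fix x assume "x \<in> Nb"
      then obtain a where a: "a \<in> {-1,1::real}" and xa: "x \<in> NB a" unfolding Nb_def by blast
      then have "x \<in> nash_set S ?u (frozen_profiles R a)" using NB[OF a] by blast
      then show "x \<in> ?N" by (rule inN[OF a])
    qed
    have reach: "glob_br_reachable UNIV ?u profiles Nb"
      unfolding glob_br_reachable_def
    proof
      fix x :: "'v \<Rightarrow> real" assume "x \<in> profiles"
      then obtain a y where a: "a \<in> {-1,1::real}" and y: "y \<in> frozen_profiles R a" and p1: "br_path UNIV ?u x y"
        using reachF by blast
      then obtain z where z: "z \<in> NB a" and p2: "br_path S ?u y z"
        using NB[OF a] unfolding glob_br_stable_def glob_br_reachable_def by blast
      have "br_path UNIV ?u x z" using p1 path_S_UNIV[OF p2] unfolding br_path_def by simp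
      then show "\<exists>z\<in>Nb. br_path UNIV ?u x z" using z a unfolding Nb_def by blast
    qed
    have inv: "br_invariant UNIV ?u profiles Nb"
      unfolding br_invariant_def
    proof (intro ballI impI)
      fix x y :: "'v \<Rightarrow> real" assume x: "x \<in> Nb" and y: "y \<in> profiles" and p: "br_path UNIV ?u x y"
      then obtain a where a: "a \<in> {-1,1::real}" and xa: "x \<in> NB a" unfolding Nb_def by blast
      have xf: "x \<in> frozen_profiles R a" using NB[OF a] nF xa by blast
      have "br_path S ?u x y \<and> y \<in> frozen_profiles R a" by (rule path_frozen[OF p a xf])
      then have "y \<in> NB a" using NB[OF a] xa unfolding glob_br_stable_def br_invariant_def by blast
      then show "y \<in> Nb" using a unfolding Nb_def by blast
    qed
    show "\<exists>Nb. Nb \<noteq> {} \<and> Nb \<subseteq> ?N \<and> glob_br_stable UNIV ?u profiles Nb"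
      using ne sub reach inv unfolding glob_br_stable_def by blast
  qed
qed

end
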